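(* Let $n\ge 1$, $N=n^2$, and let $Q$ be an $n\times n$ square block of grid cells. For every bijection $\pi:Q\to Q$ there is a set $O$ of $4N+1$ obstacle cells, all contained in a $(3N+1)\times(3N+1)$ square region of the grid that also contains $Q$, with the following property. Place $N$ robots on the cells of $Q$ (one per cell) with the obstacle set $O$, and apply the four force-field moves $\langle u,r,d,l\rangle$ in this order. Then, for every $c\in Q$, the robot that started at $c$ ends at cell $\pi(c)$. Moreover, if every robot moves at speed $v$ cells per second, the four moves are completed within total time $10N/v$.
   Context: Model. The workspace is the integer grid $\mathbb{Z}^2$ of unit cells. A configuration consists of a finite set $O\subset\mathbb{Z}^2$ of fixed obstacle cells and finitely many labeled robots, each occupying one cell, with no two robots in the same cell and no robot on an obstacle cell. There are four commands $u,r,d,l$ with direction vectors $e_u=(0,1)$, $e_r=(1,0)$, $e_d=(0,-1)$, $e_l=(-1,0)$. Applying command $x$ (a force-field move) moves all robots simultaneously in direction $e_x$ as far as possible, each stopping when it hits an obstacle or a stopped robot: precisely, for a robot at cell $p$, let $q=p+s e_x$ ($s\ge1$) be the first obstacle cell on the ray $p+te_x$, $t=1,2,\dots$; the robot ends at cell $q-(k+1)e_x$, where $k$ is the number of robots located at cells $p+te_x$ with $0<t<s$. (The move is only considered when each such ray meets an obstacle.) A move sequence such as $\langle u,r,d,l\rangle$ means applying these commands one after another. *)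

theory Defs
  imports Main "HOL.Real"
begin

type_synonym cell = "int \<times> int"

datatype cmd = CU | CR | CD | CL

fun dvec :: "cmd \<Rightarrow> int \<times> int" where
  "dvec CU = (0, 1)" | "dvec CR = (1, 0)" | "dvec CD = (0, -1)" | "dvec CL = (-1, 0)"

definition shift :: "cell \<Rightarrow> int \<Rightarrow> cmd \<Rightarrow> cell" where
  "shift p t x = (fst p + t * fst (dvec x), snd p + t * snd (dvec x))"

definition hits :: "cell set \<Rightarrow> cmd \<Rightarrow> cell \<Rightarrow> bool" where
  "hits Obs x p = (\<exists>t::nat. 1 \<le> t \<and> shift p (int t) x \<in> Obs)"

definition first_obs :: "cell set \<Rightarrow> cmd \<Rightarrow> cell \<Rightarrow> nat" where
  "first_obs Obs x p = (LEAST t::nat. 1 \<le> t \<and> shift p (int t) x \<in> Obs)"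

text \<open>number of cells travelled: s - (k+1), with k the robots strictly between p and the obstacle
  (P is the set of all robot positions)\<close>
definition travel :: "cell set \<Rightarrow> cell set \<Rightarrow> cmd \<Rightarrow> cell \<Rightarrow> nat" where
  "travel Obs P x p = first_obs Obs x p - 1
     - card {t::nat. 0 < t \<and> t < first_obs Obs x p \<and> shift p (int t) x \<in> P}"

definition move_robot :: "cell set \<Rightarrow> cell set \<Rightarrow> cmd \<Rightarrow> cell \<Rightarrow> cell" where
  "move_robot Obs P x p = shift p (int (travel Obs P x p)) x"

text \<open>Robots are labelled by the elements of L; pos gives the current cell of each robot.\<close>
definition apply_cmd :: "cell set \<Rightarrow> cell set \<Rightarrow> cmd \<Rightarrow> (cell \<Rightarrow> cell) \<Rightarrow> (cell \<Rightarrow> cell)" where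
  "apply_cmd Obs L x pos = (\<lambda>c. move_robot Obs (pos ` L) x (pos c))"

definition cmd_defined :: "cell set \<Rightarrow> cell set \<Rightarrow> cmd \<Rightarrow> (cell \<Rightarrow> cell) \<Rightarrow> bool" where
  "cmd_defined Obs L x pos = (\<forall>c\<in>L. hits Obs x (pos c))"

definition cmd_time :: "cell set \<Rightarrow> cell set \<Rightarrow> cmd \<Rightarrow> (cell \<Rightarrow> cell) \<Rightarrow> real \<Rightarrow> real" where
  "cmd_time Obs L x pos v = Max ((\<lambda>c. real (travel Obs (pos ` L) x (pos c))) ` L) / v"

fun run :: "cell set \<Rightarrow> cell set \<Rightarrow> cmd list \<Rightarrow> (cell \<Rightarrow> cell) \<Rightarrow> cell \<Rightarrow> cell" where
  "run Obs L [] pos = pos"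
| "run Obs L (x # xs) pos = run Obs L xs (apply_cmd Obs L x pos)"

fun run_defined :: "cell set \<Rightarrow> cell set \<Rightarrow> cmd list \<Rightarrow> (cell \<Rightarrow> cell) \<Rightarrow> bool" where
  "run_defined Obs L [] pos = True"
| "run_defined Obs L (x # xs) pos = (cmd_defined Obs L x pos \<and> run_defined Obs L xs (apply_cmd Obs L x pos))"

fun run_time :: "cell set \<Rightarrow> cell set \<Rightarrow> cmd list \<Rightarrow> (cell \<Rightarrow> cell) \<Rightarrow> real \<Rightarrow> real" where
  "run_time Obs L [] pos v = 0"
| "run_time Obs L (x # xs) pos v = cmd_time Obs L x pos v + run_time Obs L xs (apply_cmd Obs L x pos) v"

definition block :: "int \<Rightarrow> int \<Rightarrow> int \<Rightarrow> cell set" where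
  "block a b m = {(a + i, b + j) | i j. 0 \<le> i \<and> i < m \<and> 0 \<le> j \<and> j < m}"

end

theory Submission
  imports Defs
begin


lemma block_mem[simp]: "((x,y) \<in> block a b m) \<longleftrightarrow> a \<le> x \<and> x < a+m \<and> b \<le> y \<and> y < b+m"
proof
  assume "(x,y) \<in> block a b m" then show "a \<le> x \<and> x < a+m \<and> b \<le> y \<and> y < b+m"
    unfolding block_def by auto
next
  assume h: "a \<le> x \<and> x < a+m \<and> b \<le> y \<and> y < b+m"
  then show "(x,y) \<in> block a b m" unfolding block_def
  proof (intro CollectI exI conjI)
    show "(x, y) = (a + (x-a), b + (y-b))" by simp
  qed (use h in auto)
qed

lemma shift_simps[simp]:
  "shift p t CU = (fst p, snd p + t)" "shift p t CR = (fst p + t, snd p)"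
  "shift p t CD = (fst p, snd p - t)" "shift p t CL = (fst p - t, snd p)"
  by (simp_all add: shift_def)

lemma move_gen:
  assumes "1 \<le> s" "shift p (int s) x \<in> Obs" "\<And>t. 1 \<le> t \<Longrightarrow> t < s \<Longrightarrow> shift p (int t) x \<notin> Obs"
  shows "hits Obs x p" "first_obs Obs x p = s"
    "travel Obs P x p = s - 1 - card {t::nat. 0<t \<and> t<s \<and> shift p (int t) x \<in> P}"
proof -
  show "hits Obs x p" using assms unfolding hits_def by blast
  show fo: "first_obs Obs x p = s" unfolding first_obs_def
    apply (rule Least_equality) using assms by force+
  then show "travel Obs P x p = s - 1 - card {t::nat. 0<t \<and> t<s \<and> shift p (int t) x \<in> P}"
    unfolding travel_def by simp
qed

lemma lex_less:
  fixes i i' j j' k :: int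
  assumes "0 \<le> j" "j < k" "0 \<le> j'" "i < i'"
  shows "i*k + j < i'*k + j'"
proof -
  have "(i+1)*k \<le> i'*k" using assms by (intro mult_right_mono) auto
  then show ?thesis using assms by (simp add: algebra_simps)
qed

lemma lex_inj:
  fixes i i' j j' k :: int
  assumes "0 \<le> j" "j < k" "0 \<le> j'" "j' < k" "i*k + j = i'*k + j'"
  shows "i = i' \<and> j = j'"
proof -
  have "\<not> i < i'" using lex_less[of j k j' i i'] assms by auto
  moreover have "\<not> i' < i" using lex_less[of j' k j i' i] assms by auto
  ultimately have "i = i'" by auto
  then show ?thesis using assms by simp
qed

lemma apply_cmd_cong:
  assumes "\<forall>c\<in>L. pos c = f c" "c \<in> L"
  shows "apply_cmd Obs L x pos c = move_robot Obs (f ` L) x (f c)"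
proof -
  have "pos ` L = f ` L" using assms(1) by (auto intro: image_cong)
  then show ?thesis using assms unfolding apply_cmd_def by simp
qed

lemma cmd_defined_cong:
  assumes "\<forall>c\<in>L. pos c = f c"
  shows "cmd_defined Obs L x pos = (\<forall>c\<in>L. hits Obs x (f c))"
  using assms unfolding cmd_defined_def by auto

lemma cmd_time_le:
  assumes "\<forall>c\<in>L. pos c = f c" "finite L" "L \<noteq> {}" "v > 0"
    "\<And>c. c \<in> L \<Longrightarrow> real (travel Obs (f ` L) x (f c)) \<le> B"
  shows "cmd_time Obs L x pos v \<le> B / v"
proof -
  have "pos ` L = f ` L" using assms(1) by (auto intro: image_cong)
  have "Max ((\<lambda>c. real (travel Obs (pos ` L) x (pos c))) ` L) \<le> B"
    using assms by (subst Max_le_iff) auto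
  then show ?thesis unfolding cmd_time_def using assms(4) by (simp add: divide_right_mono)
qed



lemma mult_le_aux: fixes i k :: int assumes "i < k" "0 \<le> k" shows "i * k \<le> k*k - k"
proof -
  have "i * k \<le> (k - 1) * k" using assms by (intro mult_right_mono) auto
  then show ?thesis by (simp add: algebra_simps)
qed

locale ctx = fixes a b k :: int and \<pi> :: "cell \<Rightarrow> cell"
  assumes k1: "1 \<le> k" and bij: "bij_betw \<pi> (block a b k) (block a b k)"
begin

abbreviation "Q \<equiv> block a b k"
definition "pp c = fst (\<pi> c) - a"
definition "qq c = snd (\<pi> c) - b"
definition "mm c = qq c * k + pp c"
definition "ro c = (fst c - a) * k + (snd c - b)"
definition "P1 c = (fst c, b + k + ro c)"
definition "P2 c = (a + k + 2 * mm c, b + k + ro c)"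
definition "P3 c = (a + k + 2 * mm c, snd (\<pi> c))"
definition "ObsL = (\<lambda>y. (a - 1, y)) ` {b .. b + 2*k*k - k}"
definition "ObsU = (\<lambda>i. (a + i, b + k + (i+1)*k)) ` {0..<k}"
definition "ObsR = (\<lambda>c. (a + k + 2 * mm c + 1, b + k + ro c)) ` Q"
definition "ObsD = (\<lambda>c. (a + k + 2 * mm c, b + qq c - 1)) ` Q"
definition "Obs = ObsL \<union> ObsU \<union> ObsR \<union> ObsD"

lemma piQ: "c \<in> Q \<Longrightarrow> \<pi> c \<in> Q"
  using bij by (auto simp: bij_betw_def)

lemma Qcases: assumes "c \<in> Q" obtains x y where "c = (x,y)" "a \<le> x" "x < a + k" "b \<le> y" "y < b + k"
  using assms by (cases c) auto

lemma pq_bounds: assumes "c \<in> Q" shows "0 \<le> pp c" "pp c < k" "0 \<le> qq c" "qq c < k"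
  using piQ[OF assms] by (auto simp: pp_def qq_def elim!: Qcases)


lemma mm_bounds: assumes "c \<in> Q" shows "0 \<le> mm c" "mm c \<le> k*k - 1"
  using pq_bounds[OF assms] mult_le_aux[of "qq c" k] k1 unfolding mm_def
  by (auto intro: add_nonneg_nonneg)

lemma ro_bounds: assumes "c \<in> Q" shows "0 \<le> ro c" "ro c \<le> k*k - 1"
  using assms mult_le_aux[of "fst c - a" k] k1 unfolding ro_def
  by (auto elim!: Qcases)

lemma mm_inj: assumes "c \<in> Q" "c' \<in> Q" "mm c = mm c'" shows "c = c'"
proof -
  have "qq c = qq c' \<and> pp c = pp c'"
    using lex_inj[of "pp c" k "pp c'" "qq c" "qq c'"] pq_bounds[OF assms(1)] pq_bounds[OF assms(2)] assms(3)
    by (simp add: mm_def)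
  then have "\<pi> c = \<pi> c'" by (simp add: pp_def qq_def prod_eq_iff)
  then show ?thesis using bij assms by (auto simp: bij_betw_def inj_on_def)
qed

lemma ro_inj: assumes "c \<in> Q" "c' \<in> Q" "ro c = ro c'" shows "c = c'"
proof -
  have "fst c - a = fst c' - a \<and> snd c - b = snd c' - b"
    using lex_inj[of "snd c - b" k "snd c' - b" "fst c - a" "fst c' - a"] assms
    by (auto simp: ro_def elim!: Qcases)
  then show ?thesis by (simp add: prod_eq_iff)
qed

end

context ctx begin

lemma ObsU_mem: "(X, Y) \<in> ObsU \<longleftrightarrow> (\<exists>i. 0 \<le> i \<and> i < k \<and> X = a + i \<and> Y = b + k + (i+1)*k)"
  unfolding ObsU_def by auto
lemma ObsL_mem: "(X, Y) \<in> ObsL \<longleftrightarrow> X = a - 1 \<and> b \<le> Y \<and> Y \<le> b + 2*k*k - k"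
  unfolding ObsL_def by auto
lemma ObsR_mem: "(X, Y) \<in> ObsR \<longleftrightarrow> (\<exists>c\<in>Q. X = a + k + 2 * mm c + 1 \<and> Y = b + k + ro c)"
  unfolding ObsR_def by (auto simp del: block_mem)
lemma ObsD_mem: "(X, Y) \<in> ObsD \<longleftrightarrow> (\<exists>c\<in>Q. X = a + k + 2 * mm c \<and> Y = b + qq c - 1)"
  unfolding ObsD_def by (auto simp del: block_mem)
lemma Obs_mem: "(X, Y) \<in> Obs \<longleftrightarrow> (X, Y) \<in> ObsL \<or> (X, Y) \<in> ObsU \<or> (X, Y) \<in> ObsR \<or> (X, Y) \<in> ObsD"
  unfolding Obs_def by auto

lemma stepU: assumes c: "c \<in> Q"
  shows "hits Obs CU c" "int (travel Obs Q CU c) = (fst c - a + 1)*k" "move_robot Obs Q CU c = P1 c"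
proof -
  obtain x y where cxy: "c = (x,y)" "a \<le> x" "x < a + k" "b \<le> y" "y < b + k" using c by (rule Qcases)
  define i where "i = x - a"
  define j where "j = y - b"
  have bds: "0 \<le> i" "i < k" "0 \<le> j" "j < k" using cxy by (auto simp: i_def j_def)
  have ik: "(i+1)*k = i*k + k" by (simp add: algebra_simps)
  have ik0: "0 \<le> i*k" using bds k1 by simp
  define s where "s = nat (k + (i+1)*k - j)"
  have s1': "1 \<le> k + (i+1)*k - j" using bds ik ik0 by linarith
  have s1: "1 \<le> s" and sint: "int s = k + (i+1)*k - j" using s1' by (auto simp: s_def)
  have "shift c (int s) CU = (a + i, b + k + (i+1)*k)" using sint cxy by (simp add: i_def j_def)
  moreover have "(a + i, b + k + (i+1)*k) \<in> ObsU" using bds by (auto simp: ObsU_mem)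
  ultimately have hit: "shift c (int s) CU \<in> Obs" unfolding Obs_def by simp
  have free: "shift c (int t) CU \<notin> Obs" if t: "1 \<le> t" "t < s" for t
  proof -
    have "(x, y + int t) \<notin> ObsL" using bds by (simp add: ObsL_mem i_def)
    moreover have "(x, y + int t) \<notin> ObsU"
    proof
      assume "(x, y + int t) \<in> ObsU"
      then obtain i' where "x = a + i'" "y + int t = b + k + (i'+1)*k" by (auto simp: ObsU_mem)
      then have "i' = i" "int t = int s" using sint by (auto simp: i_def j_def)
      then show False using t by simp
    qed
    moreover have "(x, y + int t) \<notin> ObsR" using bds mm_bounds by (force simp: ObsR_mem i_def)
    moreover have "(x, y + int t) \<notin> ObsD" using bds mm_bounds by (force simp: ObsD_mem i_def)
    ultimately show ?thesis using cxy by (simp add: Obs_mem)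
  qed
  have ks: "k - j \<le> int s" using sint ik ik0 bds by linarith
  have cnt: "{t::nat. 0<t \<and> t<s \<and> shift c (int t) CU \<in> Q} = {1..<nat (k-j)}"
    using cxy bds ks by (auto simp: j_def)
  have tr: "travel Obs Q CU c = s - 1 - (nat (k-j) - 1)"
    using move_gen(3)[OF s1 hit free, of Q] cnt by simp
  show "hits Obs CU c" using move_gen(1)[OF s1 hit free] .
  show ti: "int (travel Obs Q CU c) = (fst c - a + 1)*k"
  proof -
    have "nat (k-j) \<le> s" using ks by linarith
    then have "int (travel Obs Q CU c) = int s - (k - j)" using tr bds by (simp add: of_nat_diff)
    then show ?thesis using sint ik cxy by (simp add: i_def)
  qed
  show "move_robot Obs Q CU c = P1 c"
    unfolding move_robot_def P1_def ro_def using ti cxy by (simp add: algebra_simps)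
qed

end

context ctx begin

lemma stepR: assumes c: "c \<in> Q"
  shows "hits Obs CR (P1 c)" "int (travel Obs (P1 ` Q) CR (P1 c)) = k + 2 * mm c - (fst c - a)"
    "move_robot Obs (P1 ` Q) CR (P1 c) = P2 c"
proof -
  obtain x y where cxy: "c = (x,y)" "a \<le> x" "x < a + k" "b \<le> y" "y < b + k" using c by (rule Qcases)
  define i where "i = x - a"
  define j where "j = y - b"
  have bds: "0 \<le> i" "i < k" "0 \<le> j" "j < k" using cxy by (auto simp: i_def j_def)
  have roc: "ro c = i * k + j" using cxy by (simp add: ro_def i_def j_def)
  note mb = mm_bounds[OF c]
  define Y where "Y = b + k + ro c"
  have P1c: "P1 c = (x, Y)" using cxy by (simp add: P1_def Y_def)
  define s where "s = nat (k + 2 * mm c + 1 - i)"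
  have s1: "1 \<le> s" and sint: "int s = k + 2 * mm c + 1 - i" using bds mb by (auto simp: s_def)
  have "shift (P1 c) (int s) CR = (a + k + 2 * mm c + 1, b + k + ro c)"
    using sint P1c by (simp add: i_def Y_def)
  moreover have "(a + k + 2 * mm c + 1, b + k + ro c) \<in> ObsR" using c by (auto simp: ObsR_mem)
  ultimately have hit: "shift (P1 c) (int s) CR \<in> Obs" unfolding Obs_def by simp
  have free: "shift (P1 c) (int t) CR \<notin> Obs" if t: "1 \<le> t" "t < s" for t
  proof -
    have "(x + int t, Y) \<notin> ObsL" using bds by (simp add: ObsL_mem i_def)
    moreover have "(x + int t, Y) \<notin> ObsU"
    proof
      assume "(x + int t, Y) \<in> ObsU"
      then obtain i' where i': "0 \<le> i'" "x + int t = a + i'" "Y = b + k + (i'+1)*k" by (auto simp: ObsU_mem)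
      have "i < i'" using i' t by (simp add: i_def)
      then have "i * k + j < i' * k + 0" using lex_less[of j k 0 i i'] bds by simp
      moreover have "(i'+1)*k = i'*k + k" by (simp add: algebra_simps)
      ultimately show False using i' roc k1 by (simp add: Y_def)
    qed
    moreover have "(x + int t, Y) \<notin> ObsR"
    proof
      assume "(x + int t, Y) \<in> ObsR"
      then obtain c' where c': "c' \<in> Q" "x + int t = a + k + 2 * mm c' + 1" "Y = b + k + ro c'"
        by (auto simp: ObsR_mem simp del: block_mem)
      then have "c' = c" using ro_inj[OF c' (1) c] by (simp add: Y_def)
      then show False using c' sint t by (simp add: i_def)
    qed
    moreover have "(x + int t, Y) \<notin> ObsD"
    proof
      assume "(x + int t, Y) \<in> ObsD"
      then obtain c' where c': "c' \<in> Q" "Y = b + qq c' - 1"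
        by (auto simp: ObsD_mem simp del: block_mem)
      then show False using pq_bounds[OF c'(1)] ro_bounds[OF c] by (simp add: Y_def)
    qed
    ultimately show ?thesis using P1c by (simp add: Obs_mem)
  qed
  have cnt: "{t::nat. 0<t \<and> t<s \<and> shift (P1 c) (int t) CR \<in> P1 ` Q} = {}"
  proof (rule ccontr)
    assume "{t::nat. 0<t \<and> t<s \<and> shift (P1 c) (int t) CR \<in> P1 ` Q} \<noteq> {}"
    then obtain t c' where t: "0 < t" and c': "c' \<in> Q" "(x + int t, Y) = P1 c'"
      using P1c by (auto simp del: block_mem)
    then have "ro c' = ro c" "fst c' = x + int t" by (auto simp: P1_def Y_def)
    then show False using ro_inj[OF c' (1) c] t cxy by auto
  qed
  have "travel Obs (P1 ` Q) CR (P1 c) = s - 1 - card {t::nat. 0<t \<and> t<s \<and> shift (P1 c) (int t) CR \<in> P1 ` Q}"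
    by (rule move_gen(3)[OF s1 hit free])
  then have tr: "travel Obs (P1 ` Q) CR (P1 c) = s - 1" unfolding cnt by simp
  show "hits Obs CR (P1 c)" using move_gen(1)[OF s1 hit free] .
  show ti: "int (travel Obs (P1 ` Q) CR (P1 c)) = k + 2 * mm c - (fst c - a)"
    using tr sint s1 cxy by (simp add: i_def of_nat_diff)
  show "move_robot Obs (P1 ` Q) CR (P1 c) = P2 c"
    unfolding move_robot_def P2_def using ti cxy P1c by (simp add: Y_def)
qed

lemma stepD: assumes c: "c \<in> Q"
  shows "hits Obs CD (P2 c)" "int (travel Obs (P2 ` Q) CD (P2 c)) = k + ro c - qq c"
    "move_robot Obs (P2 ` Q) CD (P2 c) = P3 c"
proof -
  note mb = mm_bounds[OF c] and rb = ro_bounds[OF c] and pb = pq_bounds[OF c]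
  define X where "X = a + k + 2 * mm c"
  define Y where "Y = b + k + ro c"
  have P2c: "P2 c = (X, Y)" by (simp add: P2_def X_def Y_def)
  define s where "s = nat (k + ro c - qq c + 1)"
  have s1: "1 \<le> s" and sint: "int s = k + ro c - qq c + 1" using rb pb by (auto simp: s_def)
  have "shift (P2 c) (int s) CD = (a + k + 2 * mm c, b + qq c - 1)"
    using sint P2c by (simp add: X_def Y_def)
  moreover have "(a + k + 2 * mm c, b + qq c - 1) \<in> ObsD" using c by (auto simp: ObsD_mem)
  ultimately have hit: "shift (P2 c) (int s) CD \<in> Obs" unfolding Obs_def by simp
  have free: "shift (P2 c) (int t) CD \<notin> Obs" if t: "1 \<le> t" "t < s" for t
  proof -
    have "(X, Y - int t) \<notin> ObsL" using mb k1 by (simp add: ObsL_mem X_def)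
    moreover have "(X, Y - int t) \<notin> ObsU" using mb by (auto simp: ObsU_mem X_def)
    moreover have "(X, Y - int t) \<notin> ObsR"
    proof
      assume "(X, Y - int t) \<in> ObsR"
      then obtain c' where c': "c' \<in> Q" "X = a + k + 2 * mm c' + 1"
        by (auto simp: ObsR_mem simp del: block_mem)
      then have "2 * mm c = 2 * mm c' + 1" by (simp add: X_def)
      then show False by presburger
    qed
    moreover have "(X, Y - int t) \<notin> ObsD"
    proof
      assume "(X, Y - int t) \<in> ObsD"
      then obtain c' where c': "c' \<in> Q" "X = a + k + 2 * mm c'" "Y - int t = b + qq c' - 1"
        by (auto simp: ObsD_mem simp del: block_mem)
      then have "c' = c" using mm_inj[OF c' (1) c] by (simp add: X_def)
      then show False using c' sint t by (simp add: Y_def)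
    qed
    ultimately show ?thesis using P2c by (simp add: Obs_mem)
  qed
  have cnt: "{t::nat. 0<t \<and> t<s \<and> shift (P2 c) (int t) CD \<in> P2 ` Q} = {}"
  proof (rule ccontr)
    assume "{t::nat. 0<t \<and> t<s \<and> shift (P2 c) (int t) CD \<in> P2 ` Q} \<noteq> {}"
    then obtain t c' where t: "0 < t" and c': "c' \<in> Q" "(X, Y - int t) = P2 c'"
      using P2c by (auto simp del: block_mem)
    then have "mm c' = mm c" "Y - int t = b + k + ro c'" by (auto simp: P2_def X_def)
    then show False using mm_inj[OF c' (1) c] t by (auto simp: Y_def)
  qed
  have "travel Obs (P2 ` Q) CD (P2 c) = s - 1 - card {t::nat. 0<t \<and> t<s \<and> shift (P2 c) (int t) CD \<in> P2 ` Q}"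
    by (rule move_gen(3)[OF s1 hit free])
  then have tr: "travel Obs (P2 ` Q) CD (P2 c) = s - 1" unfolding cnt by simp
  show "hits Obs CD (P2 c)" using move_gen(1)[OF s1 hit free] .
  show ti: "int (travel Obs (P2 ` Q) CD (P2 c)) = k + ro c - qq c"
    using tr sint s1 by (simp add: of_nat_diff)
  show "move_robot Obs (P2 ` Q) CD (P2 c) = P3 c"
    unfolding move_robot_def P3_def using ti P2c by (simp add: Y_def X_def qq_def)
qed

end

context ctx begin

lemma kk: "k \<le> k * k" using k1 by (simp add: mult_le_cancel_left1)

lemma stepL: assumes c: "c \<in> Q"
  shows "hits Obs CL (P3 c)" "int (travel Obs (P3 ` Q) CL (P3 c)) = k + 2 * mm c - pp c"
    "move_robot Obs (P3 ` Q) CL (P3 c) = \<pi> c"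
proof -
  note mb = mm_bounds[OF c] and rb = ro_bounds[OF c] and pb = pq_bounds[OF c]
  define X where "X = a + k + 2 * mm c"
  define Y where "Y = b + qq c"
  have P3c: "P3 c = (X, Y)" by (simp add: P3_def X_def Y_def qq_def)
  have mmc: "mm c = qq c * k + pp c" by (simp add: mm_def)
  have qk: "0 \<le> qq c * k" using pb k1 by simp
  define s where "s = nat (k + 2 * mm c + 1)"
  have s1: "1 \<le> s" and sint: "int s = k + 2 * mm c + 1" using mb k1 by (auto simp: s_def)
  have "shift (P3 c) (int s) CL = (a - 1, b + qq c)"
    using sint P3c by (simp add: X_def Y_def)
  moreover have "(a - 1, b + qq c) \<in> ObsL"
  proof -
    have "2*k*k = k*k + k*k" by simp
    then have "qq c \<le> 2*k*k - k" using pb kk by linarith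
    then show ?thesis using pb by (simp add: ObsL_mem)
  qed
  ultimately have hit: "shift (P3 c) (int s) CL \<in> Obs" unfolding Obs_def by simp
  have free: "shift (P3 c) (int t) CL \<notin> Obs" if t: "1 \<le> t" "t < s" for t
  proof -
    have "(X - int t, Y) \<notin> ObsL" using t sint by (simp add: ObsL_mem X_def)
    moreover have "(X - int t, Y) \<notin> ObsU"
    proof
      assume "(X - int t, Y) \<in> ObsU"
      then obtain i' where i': "0 \<le> i'" "Y = b + k + (i'+1)*k" by (auto simp: ObsU_mem)
      have "0 \<le> i' * k" using i' k1 by simp
      moreover have "(i'+1)*k = i'*k + k" by (simp add: algebra_simps)
      moreover have "qq c = k + (i'+1)*k" using i' by (simp add: Y_def)
      ultimately show False using pb k1 by linarith
    qed
    moreover have "(X - int t, Y) \<notin> ObsR"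
    proof
      assume "(X - int t, Y) \<in> ObsR"
      then obtain c' where c': "c' \<in> Q" "Y = b + k + ro c'"
        by (auto simp: ObsR_mem simp del: block_mem)
      then show False using ro_bounds[OF c'(1)] pb by (simp add: Y_def)
    qed
    moreover have "(X - int t, Y) \<notin> ObsD"
    proof
      assume "(X - int t, Y) \<in> ObsD"
      then obtain c' where c': "c' \<in> Q" "X - int t = a + k + 2 * mm c'" "Y = b + qq c' - 1"
        by (auto simp: ObsD_mem simp del: block_mem)
      have q': "qq c' = qq c + 1" using c' by (simp add: Y_def)
      have "mm c' = qq c * k + k + pp c'" using q' by (simp add: mm_def algebra_simps)
      then have "mm c < mm c'" using pq_bounds[OF c'(1)] pb mmc by simp
      then show False using c' t by (simp add: X_def)
    qed
    ultimately show ?thesis using P3c by (simp add: Obs_mem)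
  qed
  have cnt: "{t::nat. 0<t \<and> t<s \<and> shift (P3 c) (int t) CL \<in> P3 ` Q} = (\<lambda>d. 2 * d) ` {1..nat (pp c)}"
  proof (intro equalityI subsetI)
    fix t assume "t \<in> {t::nat. 0<t \<and> t<s \<and> shift (P3 c) (int t) CL \<in> P3 ` Q}"
    then obtain c' where t: "0 < t" "t < s" and c': "c' \<in> Q" "(X - int t, Y) = P3 c'"
      using P3c by (auto simp del: block_mem)
    then have e1: "X - int t = a + k + 2 * mm c'" and e2: "qq c' = qq c"
      by (auto simp: P3_def Y_def qq_def)
    have "mm c' = qq c * k + pp c'" using e2 by (simp add: mm_def)
    then have "int t = 2 * (pp c - pp c')" using e1 mmc by (simp add: X_def)
    then show "t \<in> (\<lambda>d. 2 * d) ` {1..nat (pp c)}" using pq_bounds[OF c'(1)] t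
      by (intro image_eqI[where x="nat (pp c - pp c')"]) auto
  next
    fix t assume "t \<in> (\<lambda>d::nat. 2 * d) ` {1..nat (pp c)}"
    then obtain d where d: "t = 2 * d" "1 \<le> d" "d \<le> nat (pp c)" by auto
    define tg where "tg = (a + pp c - int d, b + qq c)"
    have tgQ: "tg \<in> Q" using pb d by (auto simp: tg_def)
    define c' where "c' = inv_into Q \<pi> tg"
    have c'Q: "c' \<in> Q" and pc': "\<pi> c' = tg" using bij tgQ unfolding c'_def
      by (auto simp: bij_betw_def intro: inv_into_into f_inv_into_f simp del: block_mem)
    have "mm c' = qq c * k + pp c - int d" using pc' by (simp add: mm_def pp_def qq_def tg_def)
    then have "P3 c' = (X - int t, Y)" using pc' d(1) by (simp add: P3_def X_def Y_def tg_def mmc)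
    moreover have "0 < t" using d by auto
    moreover have "int d \<le> pp c" using d pb by linarith
    then have "t < s" using d sint pb mmc qk by linarith
    ultimately show "t \<in> {t::nat. 0<t \<and> t<s \<and> shift (P3 c) (int t) CL \<in> P3 ` Q}"
      using c'Q P3c by (auto simp del: block_mem intro: rev_image_eqI)
  qed
  have cardc: "card {t::nat. 0<t \<and> t<s \<and> shift (P3 c) (int t) CL \<in> P3 ` Q} = nat (pp c)"
    unfolding cnt by (subst card_image) (auto simp: inj_on_def)
  have "travel Obs (P3 ` Q) CL (P3 c) = s - 1 - card {t::nat. 0<t \<and> t<s \<and> shift (P3 c) (int t) CL \<in> P3 ` Q}"
    by (rule move_gen(3)[OF s1 hit free])
  then have tr: "travel Obs (P3 ` Q) CL (P3 c) = s - 1 - nat (pp c)" unfolding cardc .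
  show "hits Obs CL (P3 c)" using move_gen(1)[OF s1 hit free] .
  show ti: "int (travel Obs (P3 ` Q) CL (P3 c)) = k + 2 * mm c - pp c"
  proof -
    have "nat (pp c) \<le> s - 1" using sint pb mmc qk by linarith
    then show ?thesis using tr sint s1 pb by (simp add: of_nat_diff)
  qed
  show "move_robot Obs (P3 ` Q) CL (P3 c) = \<pi> c"
    unfolding move_robot_def P3c using ti P3c by (simp add: Y_def X_def qq_def pp_def prod_eq_iff)
qed

end


lemma ival_card: "card {a..<a + k} = nat k" for a k :: int by simp

context ctx begin

lemma Q_eq: "Q = {a..<a+k} \<times> {b..<b+k}" by auto

lemma card_Q: "card Q = nat k * nat k"
  unfolding Q_eq by (simp add: card_cartesian_product)

lemma finQ: "finite Q" unfolding Q_eq by simp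

lemma fin_Obs: "finite Obs"
  unfolding Obs_def ObsL_def ObsU_def ObsR_def ObsD_def using finQ by auto

lemma ObsL_card: "card ObsL = nat (2*k*k - k + 1)"
  unfolding ObsL_def by (subst card_image) (auto simp: inj_on_def)
lemma ObsU_card: "card ObsU = nat k"
  unfolding ObsU_def by (subst card_image) (auto simp: inj_on_def)
lemma ObsR_card: "card ObsR = nat k * nat k"
  unfolding ObsR_def using ro_inj card_Q by (subst card_image) (auto simp: inj_on_def simp del: block_mem)
lemma ObsD_card: "card ObsD = nat k * nat k"
  unfolding ObsD_def using mm_inj card_Q by (subst card_image) (auto simp: inj_on_def simp del: block_mem)

lemma UI_bound: "0 \<le> i \<Longrightarrow> i < k \<Longrightarrow> k \<le> (i+1)*k \<and> (i+1)*k \<le> k*k"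
proof -
  assume h: "0 \<le> i" "i < k"
  have "1 * k \<le> (i+1)*k" using h k1 by (intro mult_right_mono) auto
  moreover have "(i+1)*k \<le> k * k" using h k1 by (intro mult_right_mono) auto
  ultimately show ?thesis by simp
qed

lemma fin_sets: "finite ObsL" "finite ObsU" "finite ObsR" "finite ObsD"
  unfolding ObsL_def ObsU_def ObsR_def ObsD_def using finQ by auto

lemma disj: "ObsL \<inter> ObsU = {}" "(ObsL \<union> ObsU) \<inter> ObsR = {}" "(ObsL \<union> ObsU \<union> ObsR) \<inter> ObsD = {}"
proof -
  show "ObsL \<inter> ObsU = {}" by (auto simp: ObsL_def ObsU_def)
  show "(ObsL \<union> ObsU) \<inter> ObsR = {}"
  proof (rule ccontr)
    assume "(ObsL \<union> ObsU) \<inter> ObsR \<noteq> {}"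
    then obtain z where z: "z \<in> ObsL \<union> ObsU" "z \<in> ObsR" by blast
    then obtain c where c: "c \<in> Q" "z = (a + k + 2 * mm c + 1, b + k + ro c)"
      by (auto simp: ObsR_def simp del: block_mem)
    have "0 \<le> mm c" using mm_bounds c by simp
    then show False using z(1) c k1 by (auto simp: ObsL_def ObsU_def)
  qed
  show "(ObsL \<union> ObsU \<union> ObsR) \<inter> ObsD = {}"
  proof (rule ccontr)
    assume "(ObsL \<union> ObsU \<union> ObsR) \<inter> ObsD \<noteq> {}"
    then obtain z where z: "z \<in> ObsL \<union> ObsU \<union> ObsR" "z \<in> ObsD" by blast
    then obtain c where c: "c \<in> Q" "z = (a + k + 2 * mm c, b + qq c - 1)"
      by (auto simp: ObsD_def simp del: block_mem)
    have "0 \<le> mm c" using mm_bounds c by simp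
    moreover have "\<And>u w::int. 2 * u \<noteq> 2 * w + 1" by presburger
    ultimately show False using z(1) c k1 by (auto simp: ObsL_def ObsU_def ObsR_def simp del: block_mem)
  qed
qed

lemma card_Obs: "int (card Obs) = 4*k*k + 1"
proof -
  have "card Obs = card ObsL + card ObsU + card ObsR + card ObsD"
    unfolding Obs_def using fin_sets disj by (simp add: card_Un_disjoint)
  also have "int \<dots> = (2*k*k - k + 1) + k + k*k + k*k"
    using k1 kk by (simp add: ObsL_card ObsU_card ObsR_card ObsD_card)
  finally show ?thesis by simp
qed

lemma Obs_box: "Obs \<subseteq> block (a-1) (b-1) (3*k*k+1)"
proof -
  have "2*k*k = k*k + k*k" by simp
  then have kk3: "k + 1 \<le> 2*k*k" using kk k1 by linarith
  have "ObsL \<subseteq> block (a-1) (b-1) (3*k*k+1)" using kk k1 by (auto simp: ObsL_def)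
  moreover have "ObsU \<subseteq> block (a-1) (b-1) (3*k*k+1)"
  proof
    fix z assume "z \<in> ObsU"
    then obtain i where i: "0 \<le> i" "i < k" and z: "z = (a + i, b + k + (i+1)*k)" by (auto simp: ObsU_def)
    have ub: "k \<le> (i+1)*k \<and> (i+1)*k \<le> k*k" using UI_bound i by blast
    have "3*k*k = k*k+k*k+k*k" by simp
    then show "z \<in> block (a-1) (b-1) (3*k*k+1)" unfolding z using ub i kk k1 kk3
      by (simp only: block_mem) linarith
  qed
  moreover have "ObsR \<subseteq> block (a-1) (b-1) (3*k*k+1)"
  proof
    fix z assume "z \<in> ObsR"
    then obtain c where c: "c \<in> Q" and z: "z = (a + k + 2 * mm c + 1, b + k + ro c)" by (auto simp: ObsR_def simp del: block_mem)
    have "3*k*k = k*k+k*k+k*k" by simp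
    then show "z \<in> block (a-1) (b-1) (3*k*k+1)" unfolding z using mm_bounds[OF c] ro_bounds[OF c] kk k1
      by (simp only: block_mem) linarith
  qed
  moreover have "ObsD \<subseteq> block (a-1) (b-1) (3*k*k+1)"
  proof
    fix z assume "z \<in> ObsD"
    then obtain c where c: "c \<in> Q" and z: "z = (a + k + 2 * mm c, b + qq c - 1)" by (auto simp: ObsD_def simp del: block_mem)
    have "3*k*k = k*k+k*k+k*k" by simp
    then show "z \<in> block (a-1) (b-1) (3*k*k+1)" unfolding z using mm_bounds[OF c] pq_bounds[OF c] kk k1
      by (simp only: block_mem) linarith
  qed
  ultimately show ?thesis unfolding Obs_def by blast
qed

lemma Q_box: "Q \<subseteq> block (a-1) (b-1) (3*k*k+1)"
proof
  fix z assume "z \<in> Q"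
  then obtain x y where "z = (x,y)" "a \<le> x" "x < a + k" "b \<le> y" "y < b + k" by (rule Qcases)
  moreover have "3*k*k = k*k+k*k+k*k" by simp
  ultimately show "z \<in> block (a-1) (b-1) (3*k*k+1)" using kk k1
    by (simp only: block_mem prod.inject) linarith
qed

lemma Obs_Q: "Obs \<inter> Q = {}"
proof -
  have "ObsL \<inter> Q = {}" by (auto simp: ObsL_def)
  moreover have "ObsU \<inter> Q = {}"
  proof (rule ccontr)
    assume "ObsU \<inter> Q \<noteq> {}"
    then obtain i where i: "0 \<le> i" "i < k" "(a + i, b + k + (i+1)*k) \<in> Q" by (auto simp: ObsU_def simp del: block_mem)
    have ub: "k \<le> (i+1)*k \<and> (i+1)*k \<le> k*k" using UI_bound i by blast
    show False using i ub by (simp only: block_mem) linarith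
  qed
  moreover have "ObsR \<inter> Q = {}"
  proof (rule ccontr)
    assume "ObsR \<inter> Q \<noteq> {}"
    then obtain c where c: "c \<in> Q" "(a + k + 2 * mm c + 1, b + k + ro c) \<in> Q" by (auto simp: ObsR_def simp del: block_mem)
    show False using c(2) mm_bounds[OF c(1)] by (simp only: block_mem) linarith
  qed
  moreover have "ObsD \<inter> Q = {}"
  proof (rule ccontr)
    assume "ObsD \<inter> Q \<noteq> {}"
    then obtain c where c: "c \<in> Q" "(a + k + 2 * mm c, b + qq c - 1) \<in> Q" by (auto simp: ObsD_def simp del: block_mem)
    show False using c(2) mm_bounds[OF c(1)] by (simp only: block_mem) linarith
  qed
  ultimately show ?thesis unfolding Obs_def by blast
qed

end


lemma int_real_le: "int m \<le> B \<Longrightarrow> real m \<le> real_of_int B"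
  by (metis of_int_le_iff of_int_of_nat_eq)

context ctx begin

lemma bound_U: "c \<in> Q \<Longrightarrow> real (travel Obs (id ` Q) CU (id c)) \<le> real_of_int (k*k)"
  using stepU(2)[of c] UI_bound[of "fst c - a"] by (intro int_real_le) (auto elim!: Qcases)
lemma k3: "3*k*k = k*k+k*k+k*k" by simp

lemma bound_R: assumes c: "c \<in> Q" shows "real (travel Obs (P1 ` Q) CR (P1 c)) \<le> real_of_int (3*k*k)"
proof -
  have "a \<le> fst c" using c by (auto elim!: Qcases)
  then show ?thesis using stepR(2)[OF c] mm_bounds[OF c] kk k3 by (intro int_real_le) linarith
qed
lemma bound_D: assumes c: "c \<in> Q" shows "real (travel Obs (P2 ` Q) CD (P2 c)) \<le> real_of_int (3*k*k)"
  using stepD(2)[OF c] ro_bounds[OF c] pq_bounds[OF c] kk k3 by (intro int_real_le) linarith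
lemma bound_L: assumes c: "c \<in> Q" shows "real (travel Obs (P3 ` Q) CL (P3 c)) \<le> real_of_int (3*k*k)"
  using stepL(2)[OF c] mm_bounds[OF c] pq_bounds[OF c] kk k3 by (intro int_real_le) linarith

lemma run_facts:
  shows "run_defined Obs Q [CU,CR,CD,CL] id"
    "\<forall>c\<in>Q. run Obs Q [CU,CR,CD,CL] id c = \<pi> c"
    "v > 0 \<Longrightarrow> run_time Obs Q [CU,CR,CD,CL] id v \<le> real_of_int (10 * (k*k)) / v"
proof -
  define p1 where "p1 = apply_cmd Obs Q CU id"
  define p2 where "p2 = apply_cmd Obs Q CR p1"
  define p3 where "p3 = apply_cmd Obs Q CD p2"
  define p4 where "p4 = apply_cmd Obs Q CL p3"
  have h0: "\<forall>c\<in>Q. id c = id c" by simp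
  have h1: "\<forall>c\<in>Q. p1 c = P1 c" unfolding p1_def using apply_cmd_cong[OF h0] stepU(3) by (simp add: id_def)
  have h2: "\<forall>c\<in>Q. p2 c = P2 c" unfolding p2_def using apply_cmd_cong[OF h1] stepR(3) by simp
  have h3: "\<forall>c\<in>Q. p3 c = P3 c" unfolding p3_def using apply_cmd_cong[OF h2] stepD(3) by simp
  have h4: "\<forall>c\<in>Q. p4 c = \<pi> c" unfolding p4_def using apply_cmd_cong[OF h3] stepL(3) by simp
  have d1: "cmd_defined Obs Q CU id" using cmd_defined_cong[OF h0] stepU(1) by (simp add: id_def)
  have d2: "cmd_defined Obs Q CR p1" using cmd_defined_cong[OF h1] stepR(1) by simp
  have d3: "cmd_defined Obs Q CD p2" using cmd_defined_cong[OF h2] stepD(1) by simp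
  have d4: "cmd_defined Obs Q CL p3" using cmd_defined_cong[OF h3] stepL(1) by simp
  show "run_defined Obs Q [CU,CR,CD,CL] id"
    using d1 d2 d3 d4 unfolding p1_def p2_def p3_def by simp
  have "run Obs Q [CU,CR,CD,CL] id = p4" by (simp add: p1_def p2_def p3_def p4_def)
  then show "\<forall>c\<in>Q. run Obs Q [CU,CR,CD,CL] id c = \<pi> c" using h4 by simp
  assume v: "v > 0"
  have "(a,b) \<in> Q" using k1 by simp
  then have ne: "Q \<noteq> {}" by blast
  have "run_time Obs Q [CU,CR,CD,CL] id v = cmd_time Obs Q CU id v + cmd_time Obs Q CR p1 v
      + cmd_time Obs Q CD p2 v + cmd_time Obs Q CL p3 v" by (simp add: p1_def p2_def p3_def)
  also have "\<dots> \<le> real_of_int (k*k) / v + real_of_int (3*k*k) / v + real_of_int (3*k*k) / v + real_of_int (3*k*k) / v"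
    by (intro add_mono cmd_time_le[OF h0 finQ ne v] cmd_time_le[OF h1 finQ ne v]
        cmd_time_le[OF h2 finQ ne v] cmd_time_le[OF h3 finQ ne v] bound_U bound_R bound_D bound_L)
  also have "\<dots> = real_of_int (10 * (k*k)) / v" by (simp add: field_simps)
  finally show "run_time Obs Q [CU,CR,CD,CL] id v \<le> real_of_int (10 * (k*k)) / v" .
qed

end


theorem theorem1:
  fixes n :: nat and a b :: int and \<pi> :: "cell \<Rightarrow> cell" and v :: real
  assumes "n \<ge> 1" and "v > 0"
    and "bij_betw \<pi> (block a b (int n)) (block a b (int n))"
  shows "\<exists>(Obs :: cell set) x0 y0.
     finite Obs \<and> card Obs = 4 * n^2 + 1
     \<and> Obs \<subseteq> block x0 y0 (3 * int n^2 + 1)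
     \<and> block a b (int n) \<subseteq> block x0 y0 (3 * int n^2 + 1)
     \<and> Obs \<inter> block a b (int n) = {}
     \<and> run_defined Obs (block a b (int n)) [CU, CR, CD, CL] id
     \<and> (\<forall>c\<in>block a b (int n). run Obs (block a b (int n)) [CU, CR, CD, CL] id c = \<pi> c)
     \<and> run_time Obs (block a b (int n)) [CU, CR, CD, CL] id v \<le> 10 * real (n^2) / v"
proof -
  interpret ctx a b "int n" \<pi> using assms by unfold_locales auto
  have sq: "3 * int n^2 + 1 = 3 * int n * int n + 1" by (simp add: power2_eq_square)
  have "int (card Obs) = int (4 * n^2 + 1)" using card_Obs by (simp add: power2_eq_square)
  then have cO: "card Obs = 4 * n^2 + 1" by linarith
  have rt: "real_of_int (10 * (int n * int n)) = 10 * real (n^2)" by (simp add: power2_eq_square)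
  show ?thesis
    apply (rule exI[of _ Obs], rule exI[of _ "a-1"], rule exI[of _ "b-1"])
    using fin_Obs cO Obs_box Q_box Obs_Q run_facts(1,2) run_facts(3)[of v] assms(2) unfolding sq rt by simp
qed


end
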